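(* Let $n\ge1$, $N=\{1,\dots,n\}$, $A=[0,1]$, and let $f$ be an OWA mechanism with weights $w_1,\dots,w_n\in[0,1]$, $\sum_j w_j=1$. Then $f$ is strategy-proof if and only if $w_j=1$ for some $j\in\{1,\dots,n\}$.
   Context: A mechanism is a map $f:A^n\to A$ from profiles $x=(x_i)_{i\in N}$ of reported locations to a facility location; agent $i$ with true location $x_i$ has utility $u(x_i,y)=1-|x_i-y|$ for facility location $y$. An OWA mechanism with weights $w_1,\dots,w_n$ returns $f(x)=\sum_{j=1}^n w_j x_{\pi(j)}$, where $\pi$ is a permutation of $N$ with $x_{\pi(1)}\le\dots\le x_{\pi(n)}$. $f$ is strategy-proof if for every $i\in N$, every $x_{-i}\in A^{n-1}$ and all $x_i,x_i'\in A$: $u(x_i,f(x_i,x_{-i}))\ge u(x_i,f(x_i',x_{-i}))$. *)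

theory Defs
  imports "HOL-Analysis.Analysis"
begin

text \<open>Agents are 0,...,n-1 (the paper's 1,...,n); a profile is a function
  x :: nat => real, of which only the values at i < n matter.
  Weights w are indexed 1,...,n as in the paper.\<close>

definition profiles :: "nat \<Rightarrow> (nat \<Rightarrow> real) set" where
  "profiles n = {x. \<forall>i<n. x i \<in> {0..1}}"

definition utility :: "real \<Rightarrow> real \<Rightarrow> real" where
  "utility xi y = 1 - \<bar>xi - y\<bar>"

definition order_stat :: "nat \<Rightarrow> (nat \<Rightarrow> real) \<Rightarrow> nat \<Rightarrow> real" where
  "order_stat n x j = sort (map x [0..<n]) ! (j - 1)"

definition owa :: "nat \<Rightarrow> (nat \<Rightarrow> real) \<Rightarrow> (nat \<Rightarrow> real) \<Rightarrow> real" where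
  "owa n w x = (\<Sum>j=1..n. w j * order_stat n x j)"

definition strategy_proof :: "nat \<Rightarrow> ((nat \<Rightarrow> real) \<Rightarrow> real) \<Rightarrow> bool" where
  "strategy_proof n f \<longleftrightarrow>
     (\<forall>i<n. \<forall>x\<in>profiles n. \<forall>xi'\<in>{0..1}.
        utility (x i) (f x) \<ge> utility (x i) (f (x(i := xi'))))"

end

theory Submission
  imports Defs
begin

lemma sorted_nth_ge_iff:
  fixes s :: "real list"
  shows "sorted s \<Longrightarrow> i < length s \<Longrightarrow> (v \<le> s!i) \<longleftrightarrow> length (filter (\<lambda>a. a < v) s) \<le> i"
proof (induction s arbitrary: i)
  case Nil
  then show ?case by simp
next
  case (Cons a t)
  have all: "\<forall>b\<in>set t. a \<le> b" using Cons.prems(1) by simp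
  show ?case
  proof (cases i)
    case 0
    show ?thesis
    proof (cases "v \<le> a")
      case True
      then have "filter (\<lambda>a. a < v) (a # t) = []" using all by (auto simp: filter_empty_conv)
      then show ?thesis using 0 True by simp
    next
      case False
      then show ?thesis using 0 by simp
    qed
  next
    case (Suc i')
    have IH: "(v \<le> t!i') \<longleftrightarrow> length (filter (\<lambda>a. a < v) t) \<le> i'"
      using Cons.IH Cons.prems Suc by simp
    show ?thesis
    proof (cases "a < v")
      case True
      then show ?thesis using IH Suc by simp
    next
      case False
      then have "filter (\<lambda>a. a < v) t = []" using all by (auto simp: filter_empty_conv)
      moreover have "t ! i' \<in> set t" using Cons.prems Suc by simp
      ultimately show ?thesis using False all Suc by fastforce
    qed
  qed
qed

lemma os_ge_iff:
  assumes "1 \<le> j" "j \<le> n"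
  shows "(v \<le> order_stat n x j) \<longleftrightarrow> card {k. k < n \<and> x k < v} \<le> j - 1"
proof -
  let ?xs = "map x [0..<n]"
  have "length (filter (\<lambda>a. a < v) (sort ?xs)) = length (filter (\<lambda>a. a < v) ?xs)"
    by (metis mset_filter mset_sort size_mset)
  also have "\<dots> = card {k. k < n \<and> x k < v}"
  proof -
    have "{i. i < n \<and> map x [0..<n] ! i < v} = {k. k < n \<and> x k < v}" by auto
    then show ?thesis by (simp add: length_filter_conv_card)
  qed
  finally have L: "length (filter (\<lambda>a. a < v) (sort ?xs)) = card {k. k < n \<and> x k < v}" .
  have "(v \<le> sort ?xs ! (j - 1)) \<longleftrightarrow> length (filter (\<lambda>a. a < v) (sort ?xs)) \<le> j - 1"
    by (rule sorted_nth_ge_iff) (use assms in auto)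
  then show ?thesis using L unfolding order_stat_def by simp
qed

lemma os_sp:
  assumes "1 \<le> j" "j \<le> n" "i < n"
  shows "\<bar>x i - order_stat n x j\<bar> \<le> \<bar>x i - order_stat n (x(i := z)) j\<bar>"
proof -
  define y where "y = order_stat n x j"
  define y' where "y' = order_stat n (x(i := z)) j"
  consider "x i = y" | "x i < y" | "x i > y" by linarith
  then show ?thesis
  proof cases
    case 1 then show ?thesis unfolding y_def by simp
  next
    case 2
    have c: "card {k. k < n \<and> x k < y} \<le> j - 1" using os_ge_iff[OF assms(1,2), of y x] y_def by simp
    have "{k. k < n \<and> (x(i := z)) k < y} \<subseteq> {k. k < n \<and> x k < y}" using 2 by auto
    then have "card {k. k < n \<and> (x(i := z)) k < y} \<le> card {k. k < n \<and> x k < y}"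
      by (intro card_mono) auto
    then have "card {k. k < n \<and> (x(i := z)) k < y} \<le> j - 1"
      using c by linarith
    then have "y \<le> y'" using os_ge_iff[OF assms(1,2)] y'_def by simp
    then show ?thesis using 2 unfolding y_def[symmetric] y'_def[symmetric] by simp
  next
    case 3
    have "y' \<le> y"
    proof (rule ccontr)
      assume "\<not> y' \<le> y"
      define v where "v = min y' (x i)"
      have "\<not> v \<le> y" using 3 \<open>\<not> y' \<le> y\<close> v_def by simp
      then have c1: "\<not> card {k. k < n \<and> x k < v} \<le> j - 1" using os_ge_iff[OF assms(1,2)] y_def by simp
      have "v \<le> y'" using v_def by simp
      then have c2: "card {k. k < n \<and> (x(i := z)) k < v} \<le> j - 1" using os_ge_iff[OF assms(1,2)] y'_def by simp
      have "{k. k < n \<and> x k < v} \<subseteq> {k. k < n \<and> (x(i := z)) k < v}" using v_def by auto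
      then have "card {k. k < n \<and> x k < v} \<le> card {k. k < n \<and> (x(i := z)) k < v}"
        by (intro card_mono) auto
      then show False using c1 c2 by linarith
    qed
    then show ?thesis using 3 unfolding y_def[symmetric] y'_def[symmetric] by simp
  qed
qed

theorem proposition2:
  fixes n :: nat and w :: "nat \<Rightarrow> real"
  assumes "n \<ge> 1"
    and "\<forall>j\<in>{1..n}. w j \<in> {0..1}"
    and "(\<Sum>j=1..n. w j) = 1"
  shows "strategy_proof n (owa n w) \<longleftrightarrow> (\<exists>j\<in>{1..n}. w j = 1)"
proof
  assume sp: "strategy_proof n (owa n w)"
  show "\<exists>j\<in>{1..n}. w j = 1"
  proof (rule ccontr)
    assume no: "\<not> (\<exists>j\<in>{1..n}. w j = 1)"
    define P where "P = {j \<in> {1..n}. w j > 0}"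
    have "P \<noteq> {}"
    proof
      assume "P = {}"
      then have "\<forall>j\<in>{1..n}. w j = 0" using assms(2) P_def by force
      then show False using assms(3) by simp
    qed
    moreover have "finite P" using P_def by simp
    ultimately have jP: "Max P \<in> P" by simp
    define j where "j = Max P"
    have j1: "1 \<le> j" "j \<le> n" "w j > 0" using jP j_def P_def by auto
    have wj1: "w j < 1" using no j1 assms(2) by force
    have wz: "w k = 0" if "j < k" "k \<le> n" for k
    proof -
      have "k \<notin> P" using that \<open>finite P\<close> j_def Max_ge leD by blast
      moreover have "k \<in> {1..n}" using that j1 by simp
      ultimately have "\<not> w k > 0" "w k \<ge> 0" using assms(2) P_def by auto
      then show ?thesis by simp
    qed
    define x where "x = (\<lambda>k::nat. if k < j - 1 then 0 else if k = j - 1 then w j else (1::real))"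
    have owa_gen: "owa n w p = w j * p (j - 1)" if
      "\<And>k. k < j - 1 \<Longrightarrow> p k = 0" "p (j - 1) \<in> {0..1}" "\<And>k. k > j - 1 \<Longrightarrow> p k = 1" for p
    proof -
      have sorted: "sorted (map p [0..<n])"
        unfolding sorted_iff_nth_mono
      proof (intro allI impI)
        fix a b assume "a \<le> b" "b < length (map p [0..<n])"
        then show "map p [0..<n] ! a \<le> map p [0..<n] ! b"
          using that by (cases "a < j - 1"; cases "b < j - 1"; cases "a = j - 1"; cases "b = j - 1") auto
      qed
      have os: "order_stat n p k = p (k - 1)" if "k \<in> {1..n}" for k
      proof -
        have "k - 1 < n" using that by auto
        then show ?thesis unfolding order_stat_def using sorted by (simp add: sorted_sort_id)
      qed
      have "owa n w p = (\<Sum>k=1..n. w k * p (k - 1))" unfolding owa_def using os by simp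
      also have "\<dots> = (\<Sum>k\<in>{1..n}. if k = j then w j * p (j - 1) else 0)"
      proof (rule sum.cong)
        fix k assume k: "k \<in> {1..n}"
        show "w k * p (k - 1) = (if k = j then w j * p (j - 1) else 0)"
        proof (cases "k < j")
          case True
          then have "k - 1 < j - 1" using k by auto
          then show ?thesis using that(1)[of "k - 1"] True by simp
        next
          case False then show ?thesis using wz[of k] k by auto
        qed
      qed simp
      also have "\<dots> = w j * p (j - 1)" using j1 by simp
      finally show ?thesis .
    qed
    have xp: "x \<in> profiles n" unfolding profiles_def x_def using j1 wj1 by auto
    have "utility (x (j - 1)) (owa n w x) \<ge> utility (x (j - 1)) (owa n w (x(j - 1 := 1)))"
      using sp xp j1 unfolding strategy_proof_def by auto
    moreover have "owa n w x = w j * w j"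
      by (subst owa_gen) (use j1 wj1 in \<open>auto simp: x_def\<close>)
    moreover have "owa n w (x(j - 1 := 1)) = w j"
      by (subst owa_gen) (use j1 wj1 in \<open>auto simp: x_def\<close>)
    moreover have "x (j - 1) = w j" by (simp add: x_def)
    moreover have "w j * w j < w j" using j1 wj1 by (simp add: mult_less_cancel_left1)
    ultimately show False unfolding utility_def by auto
  qed
next
  assume "\<exists>j\<in>{1..n}. w j = 1"
  then obtain j where j: "j \<in> {1..n}" "w j = 1" by blast
  have "(\<Sum>k\<in>{1..n} - {j}. w k) = 0"
    using assms(3) j by (simp add: sum.remove)
  then have wz: "\<forall>k\<in>{1..n} - {j}. w k = 0"
    using assms(2) by (subst sum_nonneg_eq_0_iff[symmetric]) auto
  have owa: "owa n w p = order_stat n p j" for p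
  proof -
    have "owa n w p = w j * order_stat n p j + (\<Sum>k\<in>{1..n} - {j}. w k * order_stat n p k)"
      unfolding owa_def using j by (simp add: sum.remove)
    also have "(\<Sum>k\<in>{1..n} - {j}. w k * order_stat n p k) = 0" using wz by simp
    finally show ?thesis using j by simp
  qed
  show "strategy_proof n (owa n w)"
    unfolding strategy_proof_def utility_def owa
    using os_sp j by auto
qed

end
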